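(* Let $(\mathbb S,+,\cdot)$ be an Essential S-Structure. Then $(\mathbb S_0,+,\cdot)$ (with the operations of $\mathbb S$ restricted to $\mathbb S_0$) forms a Commutative Ring with Unity $1$.
   Context: An S-Structure is a triple $(\mathbb S,+,\cdot)$ where $\mathbb S$ is a set and $+,\cdot$ are binary operations on $\mathbb S$ such that: $(\mathbb S,+)$ is a commutative group with identity $0$ (the inverse of $s$ is written $-s$, and $s-t:=s+(-t)$); $\mathbb S$ is closed under $\cdot$; and there exists $s\in\mathbb S$ with $0\cdot s\neq 0$ or $s\cdot 0\neq 0$. Multiplication binds tighter than addition. The structures considered come with a distinguished element of $\mathbb S$ denoted $1$. It is Commutative if $s\cdot t=t\cdot s$ for all $s,t$. For a Commutative S-Structure and $\alpha\in\mathbb S$, put $\mathbb S_\alpha=\{s\in\mathbb S:0\cdot s=s\cdot 0=\alpha\}$ and $\Lambda=\{\alpha\in\mathbb S:\mathbb S_\alpha\neq\emptyset\}$. Wheel Distributive: $s\cdot(t+r)+(s\cdot 0)=(s\cdot t)+(s\cdot r)$ for all $s,t,r\in\mathbb S$. S-Associative: for all $m,n\in\mathbb S_0$ and $s\in\mathbb S$, $m\cdot(n\cdot s)=(m\cdot n)\cdot s-([(m-1)\cdot(n-1)]\cdot(0\cdot s))$. Base: if $\mathbb S_0\neq\emptyset$ and $\alpha\in\Lambda$, $q\in\mathbb S_\alpha$ is a Base for $\mathbb S_\alpha$ if $q+\beta\in\mathbb S_\alpha$ for all $\beta\in\mathbb S_0$ and every $s\in\mathbb S_\alpha$ equals $q+\beta$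 for some $\beta\in\mathbb S_0$. Coordinated: $\mathbb S_0\neq\emptyset$ and every $\mathbb S_\alpha$ with $\alpha\in\Lambda$ has a Base. Standard Bases: a Coordinated Commutative S-Structure has Standard Bases if there is a specified element $q_0(1)\in\mathbb S_1$ which is a Base for $\mathbb S_1$, and for every $\alpha\in\Lambda$ the element $q_0(\alpha):=\alpha\cdot(q_0(1)+1)-1$ lies in $\mathbb S_\alpha$ and is a Base for $\mathbb S_\alpha$. An Essential S-Structure is an S-Structure that is Commutative, Wheel Distributive, S-Associative, has Standard Bases (in particular is Coordinated), satisfies $0,1\in\mathbb S_0$, and satisfies $\mathbb S_0=\{1\cdot x:x\in\mathbb S_0\}$. *)

theory Defs
  imports "HOL-Algebra.Ring"
begin

text \<open>An S-Structure is given by a carrier set S, addition pl, multiplication tm,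
  the additive identity z, and a distinguished element u.\<close>

definition add_group :: "'a set \<Rightarrow> ('a \<Rightarrow> 'a \<Rightarrow> 'a) \<Rightarrow> 'a \<Rightarrow> 'a monoid" where
  "add_group S pl z = \<lparr>carrier = S, mult = pl, one = z\<rparr>"

definition sneg :: "'a set \<Rightarrow> ('a \<Rightarrow> 'a \<Rightarrow> 'a) \<Rightarrow> 'a \<Rightarrow> 'a \<Rightarrow> 'a" where
  "sneg S pl z s = inv\<^bsub>add_group S pl z\<^esub> s"

definition ssub :: "'a set \<Rightarrow> ('a \<Rightarrow> 'a \<Rightarrow> 'a) \<Rightarrow> 'a \<Rightarrow> 'a \<Rightarrow> 'a \<Rightarrow> 'a" where
  "ssub S pl z s t = pl s (sneg S pl z t)"

definition S_Structure :: "'a set \<Rightarrow> ('a \<Rightarrow> 'a \<Rightarrow> 'a) \<Rightarrow> ('a \<Rightarrow> 'a \<Rightarrow> 'a) \<Rightarrow> 'a \<Rightarrow> 'a \<Rightarrow> bool" where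
  "S_Structure S pl tm z u \<longleftrightarrow>
     comm_group (add_group S pl z) \<and>
     (\<forall>s\<in>S. \<forall>t\<in>S. tm s t \<in> S) \<and>
     (\<exists>s\<in>S. tm z s \<noteq> z \<or> tm s z \<noteq> z) \<and>
     u \<in> S"

definition S_Commutative :: "'a set \<Rightarrow> ('a \<Rightarrow> 'a \<Rightarrow> 'a) \<Rightarrow> bool" where
  "S_Commutative S tm \<longleftrightarrow> (\<forall>s\<in>S. \<forall>t\<in>S. tm s t = tm t s)"

definition S_at :: "'a set \<Rightarrow> ('a \<Rightarrow> 'a \<Rightarrow> 'a) \<Rightarrow> 'a \<Rightarrow> 'a \<Rightarrow> 'a set" where
  "S_at S tm z \<alpha> = {s\<in>S. tm z s = \<alpha> \<and> tm s z = \<alpha>}"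

definition S_Lambda :: "'a set \<Rightarrow> ('a \<Rightarrow> 'a \<Rightarrow> 'a) \<Rightarrow> 'a \<Rightarrow> 'a set" where
  "S_Lambda S tm z = {\<alpha>\<in>S. S_at S tm z \<alpha> \<noteq> {}}"

definition Wheel_Distributive :: "'a set \<Rightarrow> ('a \<Rightarrow> 'a \<Rightarrow> 'a) \<Rightarrow> ('a \<Rightarrow> 'a \<Rightarrow> 'a) \<Rightarrow> 'a \<Rightarrow> bool" where
  "Wheel_Distributive S pl tm z \<longleftrightarrow>
     (\<forall>s\<in>S. \<forall>t\<in>S. \<forall>r\<in>S. pl (tm s (pl t r)) (tm s z) = pl (tm s t) (tm s r))"

definition S_Associative :: "'a set \<Rightarrow> ('a \<Rightarrow> 'a \<Rightarrow> 'a) \<Rightarrow> ('a \<Rightarrow> 'a \<Rightarrow> 'a) \<Rightarrow> 'a \<Rightarrow> 'a \<Rightarrow> bool" where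
  "S_Associative S pl tm z u \<longleftrightarrow>
     (\<forall>m\<in>S_at S tm z z. \<forall>n\<in>S_at S tm z z. \<forall>s\<in>S.
        tm m (tm n s) =
        ssub S pl z (tm (tm m n) s)
          (tm (tm (ssub S pl z m u) (ssub S pl z n u)) (tm z s)))"

definition Is_Base :: "'a set \<Rightarrow> ('a \<Rightarrow> 'a \<Rightarrow> 'a) \<Rightarrow> ('a \<Rightarrow> 'a \<Rightarrow> 'a) \<Rightarrow> 'a \<Rightarrow> 'a \<Rightarrow> 'a \<Rightarrow> bool" where
  "Is_Base S pl tm z \<alpha> q \<longleftrightarrow>
     q \<in> S_at S tm z \<alpha> \<and>
     (\<forall>\<beta>\<in>S_at S tm z z. pl q \<beta> \<in> S_at S tm z \<alpha>) \<and>
     (\<forall>s\<in>S_at S tm z \<alpha>. \<exists>\<beta>\<in>S_at S tm z z. s = pl q \<beta>)"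

definition Coordinated :: "'a set \<Rightarrow> ('a \<Rightarrow> 'a \<Rightarrow> 'a) \<Rightarrow> ('a \<Rightarrow> 'a \<Rightarrow> 'a) \<Rightarrow> 'a \<Rightarrow> bool" where
  "Coordinated S pl tm z \<longleftrightarrow>
     S_at S tm z z \<noteq> {} \<and>
     (\<forall>\<alpha>\<in>S_Lambda S tm z. \<exists>q. Is_Base S pl tm z \<alpha> q)"

definition Standard_Bases :: "'a set \<Rightarrow> ('a \<Rightarrow> 'a \<Rightarrow> 'a) \<Rightarrow> ('a \<Rightarrow> 'a \<Rightarrow> 'a) \<Rightarrow> 'a \<Rightarrow> 'a \<Rightarrow> bool" where
  "Standard_Bases S pl tm z u \<longleftrightarrow>
     Coordinated S pl tm z \<and> S_Commutative S tm \<and>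
     (\<exists>q1. Is_Base S pl tm z u q1 \<and>
        (\<forall>\<alpha>\<in>S_Lambda S tm z.
           ssub S pl z (tm \<alpha> (pl q1 u)) u \<in> S_at S tm z \<alpha> \<and>
           Is_Base S pl tm z \<alpha> (ssub S pl z (tm \<alpha> (pl q1 u)) u)))"

definition Essential_S_Structure :: "'a set \<Rightarrow> ('a \<Rightarrow> 'a \<Rightarrow> 'a) \<Rightarrow> ('a \<Rightarrow> 'a \<Rightarrow> 'a) \<Rightarrow> 'a \<Rightarrow> 'a \<Rightarrow> bool" where
  "Essential_S_Structure S pl tm z u \<longleftrightarrow>
     S_Structure S pl tm z u \<and>
     S_Commutative S tm \<and>
     Wheel_Distributive S pl tm z \<and>
     S_Associative S pl tm z u \<and>
     Standard_Bases S pl tm z u \<and>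
     z \<in> S_at S tm z z \<and> u \<in> S_at S tm z z \<and>
     S_at S tm z z = {tm u x | x. x \<in> S_at S tm z z}"

end

theory Submission
  imports Defs
begin

locale ess =
  fixes S :: "'a set" and pl tm :: "'a \<Rightarrow> 'a \<Rightarrow> 'a" and z u :: 'a
  assumes E: "Essential_S_Structure S pl tm z u"
begin

abbreviation "G \<equiv> add_group S pl z"
abbreviation "n \<equiv> sneg S pl z"
abbreviation "S0 \<equiv> S_at S tm z z"

lemma G: "comm_group G"
  using E unfolding Essential_S_Structure_def S_Structure_def by blast

lemma Gc[simp]: "carrier G = S" "mult G = pl" "one G = z"
  by (simp_all add: add_group_def)

interpretation g: comm_group G by (rule G)

lemma pl_cl[simp]: "x \<in> S \<Longrightarrow> y \<in> S \<Longrightarrow> pl x y \<in> S"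
  using comm_group.axioms(2)[OF G] group.axioms(1) monoid.m_closed by fastforce
lemma z_in[simp]: "z \<in> S"
  using G by (metis Gc(1) Gc(3) comm_group_def group.is_monoid monoid.one_closed)
lemma n_cl[simp]: "x \<in> S \<Longrightarrow> n x \<in> S"
  unfolding sneg_def using G by (metis Gc(1) comm_group_def group.inv_closed)
lemma assoc: "x \<in> S \<Longrightarrow> y \<in> S \<Longrightarrow> w \<in> S \<Longrightarrow> pl (pl x y) w = pl x (pl y w)"
  using G by (metis Gc comm_group_def group.is_monoid monoid.m_assoc)
lemma comm: "x \<in> S \<Longrightarrow> y \<in> S \<Longrightarrow> pl x y = pl y x"
  using G using g.m_comm by (metis Gc)
lemma zl[simp]: "x \<in> S \<Longrightarrow> pl z x = x"
  using G by (metis Gc comm_group_def group.is_monoid monoid.l_one)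
lemma zr[simp]: "x \<in> S \<Longrightarrow> pl x z = x"
  using G by (metis Gc comm_group_def group.is_monoid monoid.r_one)
lemma invr[simp]: "x \<in> S \<Longrightarrow> pl x (n x) = z"
  unfolding sneg_def using G by (metis Gc comm_group_def group.r_inv)
lemma invl[simp]: "x \<in> S \<Longrightarrow> pl (n x) x = z"
  unfolding sneg_def using G by (metis Gc comm_group_def group.l_inv)
lemma n_uniq: "x \<in> S \<Longrightarrow> y \<in> S \<Longrightarrow> pl x y = z \<Longrightarrow> n x = y"
  unfolding sneg_def using G by (metis Gc g.inv_equality g.m_comm)
lemma nn[simp]: "x \<in> S \<Longrightarrow> n (n x) = x"
  using n_uniq invl n_cl by blast
lemma nz[simp]: "n z = z"
  using n_uniq z_in zl by blast
lemma npl: "x \<in> S \<Longrightarrow> y \<in> S \<Longrightarrow> n (pl x y) = pl (n x) (n y)"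
  unfolding sneg_def using G by (metis Gc comm_group.inv_mult)

lemma ssub[simp]: "ssub S pl z a b = pl a (n b)"
  by (simp add: ssub_def)

lemma tm_cl[simp]: "x \<in> S \<Longrightarrow> y \<in> S \<Longrightarrow> tm x y \<in> S"
  using E unfolding Essential_S_Structure_def S_Structure_def by blast
lemma tcomm: "x \<in> S \<Longrightarrow> y \<in> S \<Longrightarrow> tm x y = tm y x"
  using E unfolding Essential_S_Structure_def S_Commutative_def by blast

lemma S0_iff: "a \<in> S0 \<longleftrightarrow> a \<in> S \<and> tm z a = z"
  unfolding S_at_def using tcomm z_in by auto

lemma zS0: "z \<in> S0" and uS0: "u \<in> S0"
  using E unfolding Essential_S_Structure_def by auto
lemma uS: "u \<in> S" using uS0 S0_iff by blast

lemma WD: "s \<in> S \<Longrightarrow> t \<in> S \<Longrightarrow> r \<in> S \<Longrightarrow> pl (tm s (pl t r)) (tm s z) = pl (tm s t) (tm s r)"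
  using E unfolding Essential_S_Structure_def Wheel_Distributive_def by blast

lemma SA: "m \<in> S0 \<Longrightarrow> k \<in> S0 \<Longrightarrow> s \<in> S \<Longrightarrow>
   tm m (tm k s) = pl (tm (tm m k) s) (n (tm (tm (pl m (n u)) (pl k (n u))) (tm z s)))"
  using E unfolding Essential_S_Structure_def S_Associative_def by auto

lemma az: "a \<in> S0 \<Longrightarrow> tm a z = z"
  using S0_iff tcomm z_in by metis

lemma dist: "a \<in> S0 \<Longrightarrow> t \<in> S \<Longrightarrow> r \<in> S \<Longrightarrow> tm a (pl t r) = pl (tm a t) (tm a r)"
  using WD[of a t r] az[of a] S0_iff by auto

lemma dneg: "a \<in> S0 \<Longrightarrow> t \<in> S \<Longrightarrow> tm a (n t) = n (tm a t)"
proof -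
  assume a: "a \<in> S0" "t \<in> S"
  hence aS: "a \<in> S" using S0_iff by blast
  have "pl (tm a t) (tm a (n t)) = z" using dist[of a t "n t"] a az by simp
  thus ?thesis using n_uniq[of "tm a t" "tm a (n t)"] a aS by simp
qed

lemma plS0: "a \<in> S0 \<Longrightarrow> b \<in> S0 \<Longrightarrow> pl a b \<in> S0"
  using dist[OF zS0] S0_iff by auto
lemma nS0: "a \<in> S0 \<Longrightarrow> n a \<in> S0"
  using dneg[OF zS0] S0_iff by auto

lemma key: "a \<in> S0 \<Longrightarrow> b \<in> S0 \<Longrightarrow>
  tm z (tm a b) = n (pl (n (tm z (tm a u))) (tm z (tm u u)))"
proof -
  assume a: "a \<in> S0" and b: "b \<in> S0"
  have aS: "a \<in> S" and bS: "b \<in> S" using a b S0_iff by auto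
  have za: "tm z a = z" and zb: "tm z b = z" using a b S0_iff by auto
  have nu: "n u \<in> S0" using nS0 uS0 .
  define Y where "Y = tm (pl z (n u)) (pl a (n u))"
  have 1: "tm z (tm a b) = n (tm Y z)"
    using SA[OF zS0 a bS] za zb bS uS aS unfolding Y_def by simp
  have "Y = tm (n u) (pl a (n u))" unfolding Y_def using uS by simp
  also have "\<dots> = pl (tm (n u) a) (tm (n u) (n u))" using dist[OF nu] aS uS by simp
  also have "tm (n u) a = n (tm a u)" using tcomm[of "n u" a] dneg[OF a uS] aS uS by simp
  also have "tm (n u) (n u) = tm u u"
  proof -
    have "tm (n u) (n u) = n (tm (n u) u)" using dneg[OF nu] uS by simp
    also have "tm (n u) u = tm u (n u)" using tcomm uS by simp
    also have "\<dots> = n (tm u u)" using dneg[OF uS0] uS by simp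
    finally show ?thesis using uS by simp
  qed
  finally have Y: "Y = pl (n (tm a u)) (tm u u)" .
  have YS: "Y \<in> S" using Y aS uS by simp
  have "tm Y z = tm z Y" using tcomm YS by simp
  also have "\<dots> = pl (n (tm z (tm a u))) (tm z (tm u u))"
    using Y dist[OF zS0] dneg[OF zS0] aS uS by simp
  finally show ?thesis using 1 by simp
qed

lemma tmS0: "a \<in> S0 \<Longrightarrow> b \<in> S0 \<Longrightarrow> tm a b \<in> S0"
proof -
  assume a: "a \<in> S0" and b: "b \<in> S0"
  have aS: "a \<in> S" and bS: "b \<in> S" using a b S0_iff by auto
  have uS: "u \<in> S" by (rule uS)
  have uu: "tm z (tm u u) = z"
  proof -
    have "tm z (tm u u) = n (pl (n (tm z (tm u u))) (tm z (tm u u)))" using key[OF uS0 uS0] .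
    also have "\<dots> = z" using uS by simp
    finally show ?thesis .
  qed
  have au: "tm z (tm a u) = z"
  proof -
    have "tm z (tm a u) = tm z (tm u a)" using tcomm aS uS by simp
    also have "\<dots> = n (pl (n (tm z (tm u u))) (tm z (tm u u)))" using key[OF uS0 a] .
    also have "\<dots> = z" using uS by simp
    finally show ?thesis .
  qed
  have "tm z (tm a b) = z" using key[OF a b] au uu by simp
  thus ?thesis using S0_iff aS bS by simp
qed

lemma massoc: "a \<in> S0 \<Longrightarrow> b \<in> S0 \<Longrightarrow> c \<in> S0 \<Longrightarrow> tm (tm a b) c = tm a (tm b c)"
proof -
  assume a: "a \<in> S0" and b: "b \<in> S0" and c: "c \<in> S0"
  have aS: "a \<in> S" and bS: "b \<in> S" and cS: "c \<in> S" using a b c S0_iff by auto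
  have X: "tm (pl a (n u)) (pl b (n u)) \<in> S0"
    using tmS0 plS0 nS0 uS0 a b by blast
  have "tm z c = z" using c S0_iff by auto
  thus ?thesis using SA[OF a b cS] az[OF X] aS bS cS by simp
qed

lemma uu: "tm u u = u"
proof -
  obtain q where q: "Is_Base S pl tm z u q"
    using E unfolding Essential_S_Structure_def Standard_Bases_def by blast
  hence qS: "q \<in> S" and zq: "tm z q = u" unfolding Is_Base_def S_at_def by auto
  have nu: "n u \<in> S0" using nS0 uS0 .
  have "tm u (tm z q) = pl (tm (tm u z) q) (n (tm (tm (pl u (n u)) (pl z (n u))) (tm z q)))"
    using SA[OF uS0 zS0 qS] .
  moreover have "tm z u = z" using uS0 S0_iff by blast
  ultimately show ?thesis using zq az[OF uS0] uS S0_iff nu by simp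
qed

lemma lone: "x \<in> S0 \<Longrightarrow> tm u x = x"
proof -
  assume x: "x \<in> S0"
  have "S0 = {tm u y | y. y \<in> S0}" using E unfolding Essential_S_Structure_def by blast
  then obtain y where y: "y \<in> S0" "x = tm u y" using x by blast
  have "tm u x = tm (tm u u) y" using massoc[OF uS0 uS0 y(1)] y(2) by simp
  thus ?thesis using uu y(2) by simp
qed

end

theorem theorem3p1p1:
  fixes S :: "'a set" and pl tm :: "'a \<Rightarrow> 'a \<Rightarrow> 'a" and z u :: 'a
  assumes "Essential_S_Structure S pl tm z u"
  shows "cring \<lparr>carrier = S_at S tm z z, mult = tm, one = u, zero = z, add = pl\<rparr>"
proof -
  interpret ess S pl tm z u using assms by unfold_locales
  have S0S: "\<And>x. x \<in> S0 \<Longrightarrow> x \<in> S" using S0_iff by blast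
  show ?thesis
  proof (rule cringI)
    show "abelian_group \<lparr>carrier = S_at S tm z z, mult = tm, one = u, zero = z, add = pl\<rparr>"
    proof (rule abelian_groupI, simp_all)
      fix x assume x: "x \<in> S0"
      show "\<exists>y\<in>S0. pl y x = z" using nS0[OF x] invl S0S[OF x] by blast
    qed (auto simp: plS0 zS0 assoc S0S intro: comm)
    show "comm_monoid \<lparr>carrier = S_at S tm z z, mult = tm, one = u, zero = z, add = pl\<rparr>"
      by (rule comm_monoidI, simp_all add: tmS0 uS0 massoc lone S0S, auto intro: tcomm simp: S0S)
    fix x y w assume "x \<in> carrier \<lparr>carrier = S_at S tm z z, mult = tm, one = u, zero = z, add = pl\<rparr>"
      "y \<in> carrier \<lparr>carrier = S_at S tm z z, mult = tm, one = u, zero = z, add = pl\<rparr>"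
      "w \<in> carrier \<lparr>carrier = S_at S tm z z, mult = tm, one = u, zero = z, add = pl\<rparr>"
    hence x: "x \<in> S0" and y: "y \<in> S0" and w: "w \<in> S0" by simp_all
    have "tm (pl x y) w = tm w (pl x y)" using tcomm S0S x y w by simp
    also have "\<dots> = pl (tm w x) (tm w y)" using dist[OF w] S0S x y by simp
    also have "\<dots> = pl (tm x w) (tm y w)" using tcomm S0S x y w by simp
    finally show "(x \<oplus>\<^bsub>\<lparr>carrier = S_at S tm z z, mult = tm, one = u, zero = z, add = pl\<rparr>\<^esub> y) \<otimes>\<^bsub>\<lparr>carrier = S_at S tm z z, mult = tm, one = u, zero = z, add = pl\<rparr>\<^esub> w =
      x \<otimes>\<^bsub>\<lparr>carrier = S_at S tm z z, mult = tm, one = u, zero = z, add = pl\<rparr>\<^esub> w \<oplus>\<^bsub>\<lparr>carrier = S_at S tm z z, mult = tm, one = u, zero = z, add = pl\<rparr>\<^esub> y \<otimes>\<^bsub>\<lparr>carrier = S_at S tm z z, mult = tm, one = u, zero = z, add = pl\<rparr>\<^esub> w"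
      by simp
  qed
qed

end
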